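(* Let $N\in\mathbb{N}$, $k\ge3$ and $\rho>0$. Let $Z$ be a homogeneous polynomial of degree $k$ in $N$-normal form, and let $z(t)$ be a real solution in $\mathcal{L}_\rho$ of the Hamiltonian system associated with $H_0+Z$. Then, writing $\mathsf{R}^N_\rho(t)=\mathsf{R}^N_\rho(z(t))$, $$\mathsf{R}^N_\rho(t)\le\mathsf{R}^N_\rho(0)+4k^3\|Z\|\int_0^t\mathsf{R}^N_\rho(s)^2\|z(s)\|_\rho^{k-3}\,\mathrm{d}s$$ and $$\|z(t)\|_\rho\le\|z(0)\|_\rho+4k^3\|Z\|\int_0^t\mathsf{R}^N_\rho(s)^2\|z(s)\|_\rho^{k-3}\,\mathrm{d}s.$$
   Context: $\mathcal{Z}=\mathbb{Z}^d\times\{\pm1\}$; for $j=(a,\delta)$, $|j|=|a|$ and $\bar j=(a,-\delta)$; $z\in\mathbb{C}^{\mathcal{Z}}$ is identified with $(\xi,\eta)$ via $z_{(a,1)}=\xi_a$, $z_{(a,-1)}=\eta_a$; $z$ is real if $z_{\bar j}=\overline{z_j}$. $\mathcal{L}_\rho$: sequences with $\|z\|_\rho=\sum_je^{\rho|j|}|z_j|<\infty$. $H_0=\sum_{a\in\mathbb{Z}^d}\omega_a\xi_a\eta_a$ with real frequencies $\omega_a=|a|^2+v_a$. The Hamiltonian system of $H$ is $\dot\xi_a=-i\partial H/\partial\eta_a$, $\dot\eta_a=i\partial H/\partial\xi_a$. For ${\boldsymbol j}=(j_1,\dots,j_\ell)$ with $j_i=(a_i,\delta_i)$: $z_{\boldsymbol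 j}=z_{j_1}\cdots z_{j_\ell}$, $\mathcal{M}({\boldsymbol j})=\sum\delta_ia_i$, $\mathcal{I}_\ell=\{{\boldsymbol j}\in\mathcal{Z}^\ell:\mathcal{M}({\boldsymbol j})=0\}$. $\mathcal{P}_k$: real polynomials $P=\sum_{\ell=2}^k\sum_{{\boldsymbol j}\in\mathcal{I}_\ell}a_{\boldsymbol j}z_{\boldsymbol j}$ with $a_{\bar{\boldsymbol j}}=\overline{a_{\boldsymbol j}}$ and bounded coefficients, normed by $\|P\|=\sum_{\ell}\sup_{{\boldsymbol j}\in\mathcal{I}_\ell}|a_{\boldsymbol j}|$. ${\boldsymbol j}\in\mathcal{Z}^\ell$ is resonant (${\boldsymbol j}\in\mathcal{N}_\ell$) if $\ell$ is even and ${\boldsymbol j}$ is, up to order, $(i_1,\dots,i_{\ell/2},\bar i_1,\dots,\bar i_{\ell/2})$ for some $i_1,\dots,i_{\ell/2}\in\mathcal{Z}$. For ${\boldsymbol j}\in\mathcal{Z}^\ell$, $\ell\ge3$, $\mu({\boldsymbol j})$ is the third largest of $|j_1|,\dots,|j_\ell|$, and $\mathcal{J}_\ell(N)=\{{\boldsymbol j}\in\mathcal{I}_\ell:\mu({\boldsymbol j})>N\}$. $Z\in\mathcal{P}_k$ is in $N$-normal form if $Z=\sum_{\ell=3}^k\sum_{{\boldsymbol j}\in\mathcal{N}_\ell\cup\mathcal{J}_\ell(N)}a_{\boldsymbol j}z_{\boldsymbol j}$. Finally $\mathsf{R}^N_\rho(z)=\sum_{j\in\mathcal{Z},\,|j|>N}e^{\rho|j|}|z_j|$.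 *)

theory Defs
  imports "HOL-Analysis.Analysis" "HOL-Library.Multiset"
begin

text \<open>Index set Z = Z^d x {+1,-1}; the boolean True encodes delta = +1, False encodes delta = -1.
  z_(a,True) = xi_a, z_(a,False) = eta_a.\<close>
type_synonym ('d) idx = "(int ^ 'd) \<times> bool"

definition anorm :: "int ^ ('d::finite) \<Rightarrow> real" where
  "anorm a = sqrt (\<Sum>i\<in>UNIV. (real_of_int (a $ i))\<^sup>2)"

definition jnorm :: "('d::finite) idx \<Rightarrow> real" where
  "jnorm j = anorm (fst j)"

definition bar :: "'d idx \<Rightarrow> 'd idx" where
  "bar j = (fst j, \<not> snd j)"

definition in_L :: "real \<Rightarrow> (('d::finite) idx \<Rightarrow> complex) \<Rightarrow> bool" where
  "in_L \<rho> z \<longleftrightarrow> (\<lambda>j. exp (\<rho> * jnorm j) * cmod (z j)) summable_on UNIV"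

definition wnorm :: "real \<Rightarrow> (('d::finite) idx \<Rightarrow> complex) \<Rightarrow> real" where
  "wnorm \<rho> z = (\<Sum>\<^sub>\<infinity>j. exp (\<rho> * jnorm j) * cmod (z j))"

definition remainder :: "nat \<Rightarrow> real \<Rightarrow> (('d::finite) idx \<Rightarrow> complex) \<Rightarrow> real" where
  "remainder N \<rho> z = (\<Sum>\<^sub>\<infinity>j\<in>{j. jnorm j > real N}. exp (\<rho> * jnorm j) * cmod (z j))"

definition is_real_seq :: "('d idx \<Rightarrow> complex) \<Rightarrow> bool" where
  "is_real_seq z \<longleftrightarrow> (\<forall>j. z (bar j) = cnj (z j))"

definition momentum :: "'d idx list \<Rightarrow> int ^ 'd" where
  "momentum js = sum_list (map (\<lambda>(a, \<delta>). if \<delta> then a else - a) js)"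

definition mu :: "('d::finite) idx list \<Rightarrow> real" where
  "mu js = rev (sort (map jnorm js)) ! 2"

definition resonant :: "('d::finite) idx list \<Rightarrow> bool" where
  "resonant js \<longleftrightarrow> even (length js) \<and> (\<exists>is. mset js = mset (is @ map bar is))"

text \<open>A homogeneous polynomial of degree k in P_k, given by its coefficient family
  a_j, j in I_k (coefficients vanish outside I_k), real and bounded.\<close>
definition hom_poly :: "nat \<Rightarrow> (('d::finite) idx list \<Rightarrow> complex) \<Rightarrow> bool" where
  "hom_poly k c \<longleftrightarrow>
     (\<forall>js. (length js \<noteq> k \<or> momentum js \<noteq> 0) \<longrightarrow> c js = 0) \<and>
     (\<forall>js. c (map bar js) = cnj (c js)) \<and>
     bdd_above (range (\<lambda>js. cmod (c js)))"

definition normal_form :: "nat \<Rightarrow> nat \<Rightarrow> (('d::finite) idx list \<Rightarrow> complex) \<Rightarrow> bool" where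
  "normal_form N k c \<longleftrightarrow> hom_poly k c \<and>
     (\<forall>js. c js \<noteq> 0 \<longrightarrow> resonant js \<or> mu js > real N)"

definition pnorm :: "nat \<Rightarrow> (('d::finite) idx list \<Rightarrow> complex) \<Rightarrow> real" where
  "pnorm k c = (SUP js \<in> {js. length js = k \<and> momentum js = 0}. cmod (c js))"

definition poly_eval :: "nat \<Rightarrow> (('d::finite) idx list \<Rightarrow> complex) \<Rightarrow> ('d idx \<Rightarrow> complex) \<Rightarrow> complex" where
  "poly_eval k c z = (\<Sum>\<^sub>\<infinity>js\<in>{js. length js = k}. c js * prod_list (map z js))"

definition dpoly :: "nat \<Rightarrow> (('d::finite) idx list \<Rightarrow> complex) \<Rightarrow> ('d idx \<Rightarrow> complex) \<Rightarrow> 'd idx \<Rightarrow> complex" where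
  "dpoly k c z i = deriv (\<lambda>w. poly_eval k c (z(i := w))) (z i)"

definition omega :: "(int ^ ('d::finite) \<Rightarrow> real) \<Rightarrow> int ^ 'd \<Rightarrow> real" where
  "omega v a = (anorm a)\<^sup>2 + v a"

definition ham_solution ::
  "real \<Rightarrow> (int ^ ('d::finite) \<Rightarrow> real) \<Rightarrow> nat \<Rightarrow> ('d idx list \<Rightarrow> complex) \<Rightarrow> real \<Rightarrow>
   (real \<Rightarrow> 'd idx \<Rightarrow> complex) \<Rightarrow> bool" where
  "ham_solution \<rho> v k c T z \<longleftrightarrow>
     (\<forall>t\<in>{0..T}. in_L \<rho> (z t) \<and> is_real_seq (z t)) \<and>
     (\<forall>t\<in>{0..T}. ((\<lambda>s. wnorm \<rho> (\<lambda>j. z s j - z t j)) \<longlongrightarrow> 0) (at t within {0..T})) \<and>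
     (\<forall>t\<in>{0..T}. \<forall>a.
        ((\<lambda>s. z s (a, True)) has_vector_derivative
            (- \<i> * (of_real (omega v a) * z t (a, True) + dpoly k c (z t) (a, False))))
          (at t within {0..T}) \<and>
        ((\<lambda>s. z s (a, False)) has_vector_derivative
            (\<i> * (of_real (omega v a) * z t (a, False) + dpoly k c (z t) (a, True))))
          (at t within {0..T}))"

end

theory Submission
  imports Defs
begin

lemma has_sum_product_nonneg:
  fixes a :: "'a \<Rightarrow> real" and b :: "'b \<Rightarrow> real"
  assumes "(a has_sum A) S" "(b has_sum B) T"
    and "\<And>x. x \<in> S \<Longrightarrow> a x \<ge> 0" "\<And>y. y \<in> T \<Longrightarrow> b y \<ge> 0"
  shows "((\<lambda>(x,y). a x * b y) has_sum (A * B)) (S \<times> T)"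
proof -
  have f: "\<And>x. x \<in> S \<Longrightarrow> ((\<lambda>y. (\<lambda>(x,y). a x * b y) (x, y)) has_sum (a x * B)) T"
    using assms(2) by (simp add: has_sum_cmult_right)
  have g: "((\<lambda>x. a x * B) has_sum (A * B)) S"
    using assms(1) by (rule has_sum_cmult_left)
  have sm: "(\<lambda>(x,y). a x * b y) summable_on Sigma S (\<lambda>_. T)"
    by (rule summable_on_SigmaI[OF f]) (use g assms(3,4) in \<open>auto simp: has_sum_imp_summable\<close>)
  show ?thesis using has_sum_SigmaI[OF f g sm] by simp
qed

lemma listprod_has_sum:
  fixes W :: "nat \<Rightarrow> 'a \<Rightarrow> real" and S :: "nat \<Rightarrow> 'a set"
  assumes "\<And>q x. q < n \<Longrightarrow> x \<in> S q \<Longrightarrow> W q x \<ge> 0"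
    and "\<And>q. q < n \<Longrightarrow> (W q has_sum s q) (S q)"
  shows "((\<lambda>r. \<Prod>q<n. W q (r!q)) has_sum (\<Prod>q<n. s q)) {r. length r = n \<and> (\<forall>q<n. r!q \<in> S q)}"
  using assms
proof (induction n arbitrary: W S s)
  case 0
  have "{r::'a list. length r = 0 \<and> (\<forall>q<0. r!q \<in> S q)} = {[]}" by auto
  then show ?case using has_sum_finite[of "{[]}" "\<lambda>r. 1::real"] by simp
next
  case (Suc n)
  define T where "T = {r. length r = n \<and> (\<forall>q<n. r!q \<in> S (Suc q))}"
  have IH: "((\<lambda>r. \<Prod>q<n. W (Suc q) (r!q)) has_sum (\<Prod>q<n. s (Suc q))) T"
    unfolding T_def by (rule Suc.IH) (use Suc.prems in auto)
  have eq: "{r. length r = Suc n \<and> (\<forall>q<Suc n. r!q \<in> S q)} = (\<lambda>(x,r). x#r) ` (S 0 \<times> T)"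
  proof (rule set_eqI, rule iffI)
    fix r assume r: "r \<in> {r. length r = Suc n \<and> (\<forall>q<Suc n. r!q \<in> S q)}"
    then obtain x r' where "r = x # r'" by (cases r) auto
    with r show "r \<in> (\<lambda>(x,r). x#r) ` (S 0 \<times> T)"
      unfolding T_def by (auto intro!: image_eqI[of _ _ "(x,r')"])
  next
    fix r assume "r \<in> (\<lambda>(x,r). x#r) ` (S 0 \<times> T)"
    then show "r \<in> {r. length r = Suc n \<and> (\<forall>q<Suc n. r!q \<in> S q)}"
      unfolding T_def by (auto simp: less_Suc_eq_0_disj)
  qed
  have inj: "inj_on (\<lambda>(x,r). x#r) (S 0 \<times> T)" by (auto simp: inj_on_def)
  have prod: "((\<lambda>(x,y). W 0 x * (\<Prod>q<n. W (Suc q) (y!q))) has_sum (s 0 * (\<Prod>q<n. s (Suc q)))) (S 0 \<times> T)"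
    by (rule has_sum_product_nonneg[OF Suc.prems(2) IH]) (use Suc.prems(1) in \<open>auto simp: T_def intro!: prod_nonneg\<close>)
  have "((\<lambda>r. \<Prod>q<Suc n. W q (r!q)) \<circ> (\<lambda>(x,r). x#r)) = (\<lambda>(x,y). W 0 x * (\<Prod>q<n. W (Suc q) (y!q)))"
    by (auto simp: prod.lessThan_Suc_shift fun_eq_iff simp del: prod.lessThan_Suc)
  with prod have "((\<lambda>r. \<Prod>q<Suc n. W q (r!q)) has_sum (\<Prod>q<Suc n. s q)) ((\<lambda>(x,r). x#r) ` (S 0 \<times> T))"
    by (subst has_sum_reindex[OF inj]) (simp add: prod.lessThan_Suc_shift del: prod.lessThan_Suc)
  with eq show ?case by simp
qed



lemma prod_list_nth: "prod_list (map f xs) = (\<Prod>q<length xs. f (xs!q))"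
  by (induction xs) (auto simp: prod.lessThan_Suc_shift simp del: prod.lessThan_Suc)

definition cnt :: "'a \<Rightarrow> 'a list \<Rightarrow> nat" where
  "cnt i js = card {q. q < length js \<and> js!q = i}"

definition pf :: "('a \<Rightarrow> 'b::comm_monoid_mult) \<Rightarrow> 'a \<Rightarrow> 'a list \<Rightarrow> 'b" where
  "pf z i js = (\<Prod>q\<in>{q. q < length js \<and> js!q \<noteq> i}. z (js!q))"

definition dl :: "('a \<Rightarrow> complex) \<Rightarrow> 'a \<Rightarrow> 'a list \<Rightarrow> complex" where
  "dl z i js = of_nat (cnt i js) * z i ^ (cnt i js - 1) * pf z i js"

lemma cnt_le: "cnt i js \<le> length js"
proof -
  have "card {q. q < length js \<and> js!q = i} \<le> card {..<length js}"
    by (rule card_mono) auto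
  then show ?thesis by (simp add: cnt_def)
qed

lemma prod_split:
  fixes z :: "'a \<Rightarrow> 'b::comm_monoid_mult"
  shows "(\<Prod>q<length js. (z(i:=x)) (js!q)) = x ^ cnt i js * pf z i js"
proof -
  have "(\<Prod>q<length js. (z(i:=x)) (js!q)) =
     (\<Prod>q\<in>{..<length js} \<inter> {q. js!q = i}. (z(i:=x)) (js!q)) *
     (\<Prod>q\<in>{..<length js} - {q. js!q = i}. (z(i:=x)) (js!q))"
    by (rule prod.Int_Diff) simp
  also have "(\<Prod>q\<in>{..<length js} \<inter> {q. js!q = i}. (z(i:=x)) (js!q)) = x ^ cnt i js"
  proof -
    have "(\<Prod>q\<in>{..<length js} \<inter> {q. js!q = i}. (z(i:=x)) (js!q)) = (\<Prod>q\<in>{..<length js} \<inter> {q. js!q = i}. x)"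
      by (rule prod.cong) auto
    also have "\<dots> = x ^ cnt i js" unfolding cnt_def
      by (simp add: Int_def conj_commute)
    finally show ?thesis .
  qed
  also have "(\<Prod>q\<in>{..<length js} - {q. js!q = i}. (z(i:=x)) (js!q)) = pf z i js"
    unfolding pf_def by (rule prod.cong) auto
  finally show ?thesis .
qed

lemma dl_pos:
  fixes z :: "'a \<Rightarrow> complex"
  shows "dl z i js = (\<Sum>p<length js. if js!p = i then (\<Prod>q\<in>{..<length js}-{p}. z (js!q)) else 0)"
proof -
  have trm: "(\<Prod>q\<in>{..<length js}-{p}. z (js!q)) = z i ^ (cnt i js - 1) * pf z i js"
    if p: "p < length js" "js!p = i" for p
  proof -
    have "(\<Prod>q\<in>{..<length js}-{p}. z (js!q)) =
       (\<Prod>q\<in>({..<length js}-{p}) \<inter> {q. js!q = i}. z (js!q)) *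
       (\<Prod>q\<in>({..<length js}-{p}) - {q. js!q = i}. z (js!q))"
      by (rule prod.Int_Diff) simp
    also have "(\<Prod>q\<in>({..<length js}-{p}) \<inter> {q. js!q = i}. z (js!q)) = z i ^ (cnt i js - 1)"
    proof -
      have "(\<Prod>q\<in>({..<length js}-{p}) \<inter> {q. js!q = i}. z (js!q)) = (\<Prod>q\<in>{q. q < length js \<and> js!q = i} - {p}. z i)"
        by (rule prod.cong) auto
      also have "\<dots> = z i ^ (cnt i js - 1)"
        using p by (simp add: cnt_def)
      finally show ?thesis .
    qed
    also have "(\<Prod>q\<in>({..<length js}-{p}) - {q. js!q = i}. z (js!q)) = pf z i js"
      unfolding pf_def using p by (intro prod.cong) auto
    finally show ?thesis .
  qed
  have "(\<Sum>p<length js. if js!p = i then (\<Prod>q\<in>{..<length js}-{p}. z (js!q)) else 0)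
      = (\<Sum>p\<in>{q. q < length js \<and> js!q = i}. z i ^ (cnt i js - 1) * pf z i js)"
    by (subst sum.inter_filter[symmetric]) (auto intro!: sum.cong simp: trm)
  also have "\<dots> = dl z i js" by (simp add: dl_def cnt_def)
  finally show ?thesis by simp
qed

lemma finsum_infsum:
  fixes f :: "'i \<Rightarrow> 'a \<Rightarrow> 'b::{topological_comm_monoid_add,t2_space}"
  assumes "finite I" "\<And>m. m \<in> I \<Longrightarrow> f m summable_on A"
  shows "(\<lambda>x. \<Sum>m\<in>I. f m x) summable_on A \<and> infsum (\<lambda>x. \<Sum>m\<in>I. f m x) A = (\<Sum>m\<in>I. infsum (f m) A)"
  using assms
proof (induction I rule: finite_induct)
  case empty
  then show ?case by simp
next
  case (insert a I)
  then have IH: "(\<lambda>x. \<Sum>m\<in>I. f m x) summable_on A" "infsum (\<lambda>x. \<Sum>m\<in>I. f m x) A = (\<Sum>m\<in>I. infsum (f m) A)"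
    by auto
  have fa: "f a summable_on A" using insert by auto
  show ?case using insert.hyps IH fa
    by (simp add: summable_on_add infsum_add)
qed

lemma dpoly_formula:
  fixes z :: "('d::finite) idx \<Rightarrow> complex" and c :: "'d idx list \<Rightarrow> complex"
  assumes zs: "(\<lambda>j. cmod (z j)) summable_on UNIV" and cb: "\<And>js. cmod (c js) \<le> B"
  shows "(\<lambda>js. c js * dl z i js) summable_on {js. length js = k}"
    and "dpoly k c z i = (\<Sum>\<^sub>\<infinity>js\<in>{js. length js = k}. c js * dl z i js)"
proof -
  define L where "L = {js::'d idx list. length js = k}"
  have B0: "B \<ge> 0" using cb[of undefined] norm_ge_zero order_trans by blast
  define w1 where "w1 = (\<lambda>j. cmod (z j))(i := 1)"
  have "w1 summable_on UNIV - {i}"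
  proof -
    have "(\<lambda>j. cmod (z j)) summable_on UNIV - {i}" by (rule summable_on_subset_banach[OF zs]) auto
    then show ?thesis by (rule summable_on_cong[THEN iffD1, rotated]) (auto simp: w1_def)
  qed
  then have "w1 summable_on insert i (UNIV - {i})" by (simp only: summable_on_insert_iff)
  then have w1s: "w1 summable_on UNIV" by (simp add: insert_absorb)
  have Phs: "((\<lambda>r. \<Prod>q<k. w1 (r!q)) has_sum (\<Prod>q<k. infsum w1 UNIV)) {r. length r = k \<and> (\<forall>q<k. r!q \<in> UNIV)}"
    by (rule listprod_has_sum) (simp add: w1_def, rule has_sum_infsum[OF w1s])
  then have Ps: "(\<lambda>r. B * (\<Prod>q<k. w1 (r!q))) summable_on L"
    unfolding L_def by (intro summable_on_cmult_right) (auto dest: has_sum_imp_summable)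
  define g where "g m js = (if cnt i js = m then c js * pf z i js else 0)" for m js
  have gs: "g m summable_on L" for m
  proof -
    have "(\<lambda>js. norm (g m js)) summable_on L"
    proof (rule summable_on_comparison_test[OF Ps])
      fix js assume js: "js \<in> L"
      have "(\<Prod>q<k. w1 (js!q)) = pf (\<lambda>j. cmod (z j)) i js"
        using prod_split[of "\<lambda>j. cmod (z j)" i 1 js] js by (simp add: L_def w1_def)
      also have "\<dots> = norm (pf z i js)" by (simp add: pf_def prod_norm)
      finally have "norm (pf z i js) = (\<Prod>q<k. w1 (js!q))" by simp
      moreover have "0 \<le> (\<Prod>q<k. w1 (js!q))" by (simp add: w1_def prod_nonneg)
      ultimately show "norm (g m js) \<le> B * (\<Prod>q<k. w1 (js!q))"
        using cb[of js] B0 by (auto simp: g_def norm_mult intro!: mult_right_mono)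
    qed auto
    then show ?thesis by (simp add: summable_on_iff_abs_summable_on_complex)
  qed
  define A where "A m = infsum (g m) L" for m
  have pe: "poly_eval k c (z(i:=x)) = (\<Sum>m\<in>{..k}. x^m * A m)" for x
  proof -
    have "poly_eval k c (z(i:=x)) = infsum (\<lambda>js. \<Sum>m\<in>{..k}. x^m * g m js) L"
      unfolding poly_eval_def L_def
    proof (rule infsum_cong)
      fix js :: "'d idx list" assume "js \<in> {js. length js = k}"
      then have len: "length js = k" by simp
      have "cnt i js \<le> k" using cnt_le[of i js] len by simp
      then have "(\<Sum>m\<in>{..k}. x^m * g m js) = x ^ cnt i js * (c js * pf z i js)"
        by (simp add: g_def if_distrib[of "\<lambda>v. x^_ * v"] cong: if_cong)
      then show "c js * prod_list (map (z(i := x)) js) = (\<Sum>m\<in>{..k}. x^m * g m js)"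
        using prod_split[of z i x js] by (simp add: prod_list_nth)
    qed
    also have "\<dots> = (\<Sum>m\<in>{..k}. infsum (\<lambda>js. x^m * g m js) L)"
      by (rule conjunct2[OF finsum_infsum]) (auto intro: summable_on_cmult_right gs)
    also have "\<dots> = (\<Sum>m\<in>{..k}. x^m * A m)"
      by (simp add: A_def infsum_cmult_right gs)
    finally show ?thesis .
  qed
  have der: "((\<lambda>x. \<Sum>m\<in>{..k}. x^m * A m) has_field_derivative (\<Sum>m\<in>{..k}. of_nat m * x^(m-1) * A m)) (at x)" for x :: complex
    by (auto intro!: derivative_eq_intros)
  have "dpoly k c z i = (\<Sum>m\<in>{..k}. of_nat m * z i^(m-1) * A m)"
    unfolding dpoly_def pe by (rule DERIV_imp_deriv[OF der])
  have ptw: "c js * dl z i js = (\<Sum>m\<in>{..k}. (of_nat m * z i^(m-1)) * g m js)" if "js \<in> L" for js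
  proof -
    have "cnt i js \<le> k" using cnt_le[of i js] that by (simp add: L_def)
    then show ?thesis
      by (simp add: g_def dl_def if_distrib[of "\<lambda>v. _ * v"] cong: if_cong)
  qed
  have fs: "(\<lambda>js. \<Sum>m\<in>{..k}. (of_nat m * z i^(m-1)) * g m js) summable_on L \<and>
      infsum (\<lambda>js. \<Sum>m\<in>{..k}. (of_nat m * z i^(m-1)) * g m js) L = (\<Sum>m\<in>{..k}. infsum (\<lambda>js. (of_nat m * z i^(m-1)) * g m js) L)"
    by (rule finsum_infsum) (auto intro: summable_on_cmult_right gs)
  show "(\<lambda>js. c js * dl z i js) summable_on {js. length js = k}"
    using fs ptw unfolding L_def by (subst summable_on_cong[where g="\<lambda>js. \<Sum>m\<in>{..k}. (of_nat m * z i^(m-1)) * g m js"]) auto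
  have "(\<Sum>\<^sub>\<infinity>js\<in>{js. length js = k}. c js * dl z i js) = infsum (\<lambda>js. \<Sum>m\<in>{..k}. (of_nat m * z i^(m-1)) * g m js) L"
    unfolding L_def by (rule infsum_cong) (simp add: ptw L_def)
  also have "\<dots> = (\<Sum>m\<in>{..k}. of_nat m * z i^(m-1) * A m)"
    using fs by (simp add: A_def infsum_cmult_right gs)
  finally show "dpoly k c z i = (\<Sum>\<^sub>\<infinity>js\<in>{js. length js = k}. c js * dl z i js)"
    using \<open>dpoly k c z i = _\<close> by simp
qed

lemma bar_bar[simp]: "bar (bar j) = j" by (simp add: bar_def)
lemma bar_neq[simp]: "bar j \<noteq> j" "j \<noteq> bar j" by (auto simp: bar_def prod_eq_iff)
lemma bar_eq_iff: "bar x = y \<longleftrightarrow> x = bar y" by (auto simp: bar_def)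
lemma jnorm_bar[simp]: "jnorm (bar j) = jnorm j" by (simp add: bar_def jnorm_def)
lemma bar_comp[simp]: "bar \<circ> bar = id" by (auto simp: fun_eq_iff)
lemma map_bar_bar[simp]: "map bar (map bar js) = js" by (induction js) auto

lemma count_image_bar: "count (image_mset bar M) x = count M (bar x)"
  by (induction M) (auto simp: bar_eq_iff)

lemma cnt_count: "cnt i js = count (mset js) i"
proof -
  have "cnt i js = length (filter ((=) i) js)"
    unfolding cnt_def length_filter_conv_card by (metis (mono_tags, lifting))
  then show ?thesis by (simp add: count_mset count_list_eq_length_filter)
qed

lemma resonant_map_bar_aux: "resonant js \<Longrightarrow> resonant (map bar js)"
proof -
  assume "resonant js"
  then obtain is' where e: "even (length js)" "mset js = mset (is' @ map bar is')"
    by (auto simp: resonant_def)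
  have "mset (map bar js) = image_mset bar (mset js)" by simp
  also have "\<dots> = image_mset bar (mset is' + image_mset bar (mset is'))" using e(2) by simp
  also have "\<dots> = mset (map bar is' @ map bar (map bar is'))" by (simp add: add.commute image_mset.compositionality)
  finally have "mset (map bar js) = mset (map bar is' @ map bar (map bar is'))" .
  then show ?thesis using e(1) unfolding resonant_def by (intro conjI exI[of _ "map bar is'"]) auto
qed

lemma resonant_map_bar[simp]: "resonant (map bar js) = resonant js"
  using resonant_map_bar_aux[of js] resonant_map_bar_aux[of "map bar js"] by auto

lemma res_cnt: "resonant js \<Longrightarrow> cnt j js = cnt (bar j) js"
proof -
  assume "resonant js"
  then obtain is' where e: "mset js = mset is' + image_mset bar (mset is')"
    by (auto simp: resonant_def)
  show ?thesis unfolding cnt_count e by (simp add: count_image_bar)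
qed

lemma cnt_map_bar: "cnt i (map bar js) = cnt (bar i) js"
  unfolding cnt_def by (rule arg_cong[where f=card]) (auto simp: bar_eq_iff)

definition pff :: "('d idx \<Rightarrow> complex) \<Rightarrow> 'd idx \<Rightarrow> 'd idx list \<Rightarrow> complex" where
  "pff z j js = (\<Prod>q\<in>{q. q < length js \<and> js!q \<noteq> j \<and> js!q \<noteq> bar j}. z (js!q))"

lemma pf_split: "pf z (bar j) js = z j ^ cnt j js * pff z j js"
proof -
  have "pf z (bar j) js = (\<Prod>q\<in>{q. q < length js \<and> js!q \<noteq> bar j} \<inter> {q. js!q = j}. z (js!q)) *
          (\<Prod>q\<in>{q. q < length js \<and> js!q \<noteq> bar j} - {q. js!q = j}. z (js!q))"
    unfolding pf_def by (rule prod.Int_Diff) simp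
  also have "(\<Prod>q\<in>{q. q < length js \<and> js!q \<noteq> bar j} \<inter> {q. js!q = j}. z (js!q)) =
      (\<Prod>q\<in>{q. q < length js \<and> js!q = j}. z j)"
    by (rule prod.cong) auto
  also have "\<dots> = z j ^ cnt j js" by (simp add: cnt_def)
  also have "(\<Prod>q\<in>{q. q < length js \<and> js!q \<noteq> bar j} - {q. js!q = j}. z (js!q)) = pff z j js"
    unfolding pff_def by (rule prod.cong) auto
  finally show ?thesis .
qed

definition ee :: "('d idx \<Rightarrow> complex) \<Rightarrow> 'd idx \<Rightarrow> 'd idx list \<Rightarrow> complex" where
  "ee z j js = of_nat (cnt (bar j) js) * (cnj (z j) * z j) ^ (cnt (bar j) js - 1) * pff z j js"

definition cres :: "('d::finite idx list \<Rightarrow> complex) \<Rightarrow> 'd idx list \<Rightarrow> complex" where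
  "cres c js = (if resonant js then c js else 0)"

definition cnr :: "('d::finite idx list \<Rightarrow> complex) \<Rightarrow> 'd idx list \<Rightarrow> complex" where
  "cnr c js = (if resonant js then 0 else c js)"

lemma dl_res:
  assumes real: "is_real_seq z" and res: "resonant js"
  shows "dl z (bar j) js = z j * ee z j js"
proof -
  define n where "n = cnt (bar j) js"
  have cj: "cnt j js = n" using res_cnt[OF res, of j] by (simp add: n_def)
  have zb: "z (bar j) = cnj (z j)" using real unfolding is_real_seq_def by blast
  show ?thesis
  proof (cases n)
    case 0
    then show ?thesis by (simp add: dl_def ee_def n_def[symmetric])
  next
    case (Suc m)
    have "dl z (bar j) js = of_nat n * cnj (z j) ^ m * (z j * z j ^ m * pff z j js)"
      by (simp add: dl_def pf_split cj Suc zb n_def[symmetric])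
    also have "\<dots> = z j * (of_nat n * (cnj (z j) * z j) ^ m * pff z j js)"
      by (simp add: power_mult_distrib)
    finally show ?thesis by (simp add: ee_def n_def[symmetric] Suc)
  qed
qed

lemma bij_map_bar: "bij_betw (map bar) {js::'d idx list. length js = k} {js. length js = k}"
  by (rule bij_betwI[where g="map bar"]) auto

lemma resonant_part:
  fixes z :: "('d::finite) idx \<Rightarrow> complex" and c :: "'d idx list \<Rightarrow> complex"
  assumes real: "is_real_seq z" and cbar: "\<And>js. c (map bar js) = cnj (c js)"
  shows "\<exists>q. Im q = 0 \<and> (\<Sum>\<^sub>\<infinity>js\<in>{js. length js = k}. cres c js * dl z (bar j) js) = z j * q"
proof -
  define L where "L = {js::'d idx list. length js = k}"
  define f where "f js = cres c js * ee z j js" for js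
  have "(\<Sum>\<^sub>\<infinity>js\<in>L. cres c js * dl z (bar j) js) = (\<Sum>\<^sub>\<infinity>js\<in>L. z j * f js)"
    by (rule infsum_cong) (auto simp: f_def cres_def dl_res[OF real])
  also have "\<dots> = z j * infsum f L" by (rule infsum_cmult_right')
  finally have eq: "(\<Sum>\<^sub>\<infinity>js\<in>L. cres c js * dl z (bar j) js) = z j * infsum f L" .
  have zb: "z (bar x) = cnj (z x)" for x using real unfolding is_real_seq_def by blast
  have pffb: "pff z j (map bar js) = cnj (pff z j js)" for js
    unfolding pff_def cnj_prod by (simp add: zb) (rule prod.cong, auto simp: bar_eq_iff)
  have fb: "f (map bar js) = cnj (f js)" for js
  proof (cases "resonant js")
    case True
    then show ?thesis
      by (simp add: f_def cres_def ee_def cbar cnt_map_bar pffb res_cnt[OF True, of j] mult.commute)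
  next
    case False
    then show ?thesis by (simp add: f_def cres_def)
  qed
  have "infsum f L = infsum (\<lambda>js. f (map bar js)) L"
    unfolding L_def by (rule infsum_reindex_bij_betw[OF bij_map_bar, symmetric])
  also have "\<dots> = cnj (infsum f L)" by (simp add: fb)
  finally have "Im (infsum f L) = 0" by (metis cnj.simps(2) neg_equal_zero)
  then show ?thesis using eq unfolding L_def by blast
qed

definition vr :: "int ^ ('d::finite) \<Rightarrow> real ^ 'd" where
  "vr a = (\<chi> i. real_of_int (a$i))"

lemma anorm_vr: "anorm a = norm (vr a)"
  by (simp add: anorm_def vr_def norm_vec_def L2_set_def)

lemma vr_add: "vr (a + b) = vr a + vr b" by (simp add: vr_def vec_eq_iff)
lemma vr_uminus: "vr (- a) = - vr a" by (simp add: vr_def vec_eq_iff)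
lemma vr_sum: "vr (sum f A) = (\<Sum>x\<in>A. vr (f x))"
  by (induction A rule: infinite_finite_induct) (auto simp: vr_add vec_eq_iff vr_def)

definition sv :: "'d idx \<Rightarrow> int ^ 'd" where
  "sv j = (if snd j then fst j else - fst j)"

lemma momentum_sum: "momentum js = (\<Sum>q<length js. sv (js!q))"
proof -
  have "momentum js = sum_list (map sv js)" unfolding momentum_def
    by (induction js) (auto simp: sv_def)
  then show ?thesis by (simp add: sum_list_sum_nth atLeast0LessThan)
qed

lemma jnorm_sv: "jnorm j = norm (vr (sv j))"
  by (simp add: jnorm_def sv_def anorm_vr vr_uminus)

lemma momentum_bound:
  assumes "momentum js = 0" "p < length js"
  shows "jnorm (js!p) \<le> (\<Sum>q\<in>{..<length js}-{p}. jnorm (js!q))"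
proof -
  have "0 = (\<Sum>q<length js. sv (js!q))" using assms momentum_sum by metis
  also have "\<dots> = sv (js!p) + (\<Sum>q\<in>{..<length js}-{p}. sv (js!q))"
    using assms(2) by (simp add: sum.remove)
  finally have e: "sv (js!p) = - (\<Sum>q\<in>{..<length js}-{p}. sv (js!q))"
    by (simp add: eq_neg_iff_add_eq_0)
  have "jnorm (js!p) = norm (\<Sum>q\<in>{..<length js}-{p}. vr (sv (js!q)))"
    by (simp add: jnorm_sv e vr_uminus vr_sum)
  also have "\<dots> \<le> (\<Sum>q\<in>{..<length js}-{p}. norm (vr (sv (js!q))))" by (rule norm_sum)
  finally show ?thesis by (simp add: jnorm_sv)
qed

lemma momentum_determines:
  assumes "momentum js = 0" "momentum js' = 0" "length js = length js'" "p < length js"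
    and "\<And>q. q < length js \<Longrightarrow> q \<noteq> p \<Longrightarrow> js!q = js'!q" "snd (js!p) = snd (js'!p)"
  shows "js = js'"
proof -
  have s: "sv (js!p) + (\<Sum>q\<in>{..<length js}-{p}. sv (js!q)) = 0"
    using assms(1,4) by (simp add: momentum_sum sum.remove)
  have s': "sv (js'!p) + (\<Sum>q\<in>{..<length js}-{p}. sv (js'!q)) = 0"
    using assms(2,3,4) by (simp add: momentum_sum sum.remove)
  have "(\<Sum>q\<in>{..<length js}-{p}. sv (js!q)) = (\<Sum>q\<in>{..<length js}-{p}. sv (js'!q))"
    using assms(5) by (intro sum.cong) auto
  with s s' have "sv (js!p) = sv (js'!p)" by (metis add_right_cancel)
  with assms(6) have "js!p = js'!p" by (cases "js!p"; cases "js'!p") (auto simp: sv_def split: if_splits)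
  then show ?thesis using assms(3,5) by (metis nth_equalityI)
qed

lemma pair_sum:
  fixes u :: "('d::finite) idx \<Rightarrow> real" and N :: nat
  assumes u0: "\<And>j. u j \<ge> 0" and us: "u summable_on UNIV"
    and pk: "p < k" "q1 < k" "q2 < k" "p \<noteq> q1" "p \<noteq> q2" "q1 \<noteq> q2"
  defines "Lg \<equiv> {j::'d idx. jnorm j > real N}"
  defines "ind \<equiv> \<lambda>js. if momentum js = 0 \<and> js!q1 \<in> Lg \<and> js!q2 \<in> Lg then (\<Prod>q\<in>{..<k}-{p}. u (js!q)) else 0"
  shows "ind summable_on {js. length js = k}"
    and "infsum ind {js. length js = k} \<le> 2 * (infsum u Lg)^2 * (infsum u UNIV)^(k-3)"
proof -
  define R where "R = infsum u Lg"
  define W where "W = infsum u UNIV"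
  define A where "A b = {js. length js = k \<and> momentum js = 0 \<and> js!q1 \<in> Lg \<and> js!q2 \<in> Lg \<and> snd (js!p) = b}" for b
  define j0 :: "'d idx" where "j0 = (0, True)"
  define \<phi> where "\<phi> js = js[p := j0]" for js :: "'d idx list"
  define S where "S q = (if q = p then {j0} else if q = q1 \<or> q = q2 then Lg else UNIV)" for q
  define Wt where "Wt q x = (if q = p then 1 else u x)" for q x
  define s where "s q = (if q = p then 1 else if q = q1 \<or> q = q2 then R else W)" for q
  define T where "T = {r. length r = k \<and> (\<forall>q<k. r!q \<in> S q)}"
  define G where "G r = (\<Prod>q<k. Wt q (r!q))" for r
  define f where "f js = (\<Prod>q\<in>{..<k}-{p}. u (js!q))" for js :: "'d idx list"
  have Ghs: "(G has_sum (\<Prod>q<k. s q)) T"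
    unfolding G_def T_def
  proof (rule listprod_has_sum)
    fix q x show "0 \<le> Wt q x" by (simp add: Wt_def u0)
  next
    fix q assume "q < k"
    show "(Wt q has_sum s q) (S q)"
    proof (cases "q = p")
      case True
      then show ?thesis by (simp add: Wt_def s_def S_def has_sum_finiteI)
    next
      case False
      then have wt: "Wt q = u" by (simp add: Wt_def fun_eq_iff)
      show ?thesis
      proof (cases "q = q1 \<or> q = q2")
        case True
        then show ?thesis using False unfolding wt s_def S_def R_def
          by (simp add: has_sum_infsum summable_on_subset_banach[OF us])
      next
        case F2: False
        then show ?thesis using False unfolding wt s_def S_def W_def
          by (simp add: has_sum_infsum us)
      qed
    qed
  qed
  have prod_s: "(\<Prod>q<k. s q) = R^2 * W^(k-3)"
  proof -
    have sub: "{p,q1,q2} \<subseteq> {..<k}" using pk by auto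
    have "(\<Prod>q<k. s q) = (\<Prod>q\<in>{p,q1,q2}. s q) * (\<Prod>q\<in>{..<k}-{p,q1,q2}. s q)"
      using prod.subset_diff[OF sub] by (simp add: mult.commute)
    also have "(\<Prod>q\<in>{p,q1,q2}. s q) = R^2" using pk by (simp add: s_def power2_eq_square)
    also have "(\<Prod>q\<in>{..<k}-{p,q1,q2}. s q) = (\<Prod>q\<in>{..<k}-{p,q1,q2}. W)"
      by (rule prod.cong) (auto simp: s_def)
    also have "\<dots> = W ^ (k-3)"
    proof -
      have "card ({..<k}-{p,q1,q2}) = k - 3"
        using sub pk by (simp add: card_Diff_subset)
      then show ?thesis by simp
    qed
    finally show ?thesis .
  qed
  have Gs: "G summable_on T" using Ghs by (rule has_sum_imp_summable)
  have G0: "G r \<ge> 0" for r by (simp add: G_def Wt_def u0 prod_nonneg)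
  have Ab: "f summable_on A b \<and> infsum f (A b) \<le> R^2 * W^(k-3)" for b
  proof -
    have inj: "inj_on \<phi> (A b)"
    proof (rule inj_onI)
      fix x y assume x: "x \<in> A b" and y: "y \<in> A b" and e: "\<phi> x = \<phi> y"
      show "x = y"
      proof (rule momentum_determines[where p=p])
        show "momentum x = 0" "momentum y = 0" "length x = length y" "p < length x"
          using x y pk by (auto simp: A_def)
        show "snd (x!p) = snd (y!p)" using x y by (auto simp: A_def)
        fix q assume "q < length x" "q \<noteq> p"
        then show "x!q = y!q" using arg_cong[OF e, of "\<lambda>r. r!q"] by (simp add: \<phi>_def)
      qed
    qed
    have sub: "\<phi> ` A b \<subseteq> T"
    proof
      fix r assume "r \<in> \<phi> ` A b"
      then obtain js where js: "js \<in> A b" "r = \<phi> js" by auto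
      show "r \<in> T" using js pk unfolding T_def S_def A_def \<phi>_def
        by (auto simp: nth_list_update)
    qed
    have fG: "f js = G (\<phi> js)" if "js \<in> A b" for js
    proof -
      have len: "length js = k" using that by (simp add: A_def)
      have "G (\<phi> js) = Wt p (\<phi> js ! p) * (\<Prod>q\<in>{..<k}-{p}. Wt q (\<phi> js ! q))"
        unfolding G_def using pk by (simp add: prod.remove)
      also have "\<dots> = f js" unfolding f_def
        by (simp add: Wt_def, rule prod.cong) (auto simp: \<phi>_def)
      finally show ?thesis by simp
    qed
    have Gsi: "G summable_on \<phi> ` A b" by (rule summable_on_subset_banach[OF Gs sub])
    have fs: "f summable_on A b"
    proof -
      have "(G \<circ> \<phi>) summable_on A b" using Gsi summable_on_reindex[OF inj] by blast
      then show ?thesis by (rule summable_on_cong[THEN iffD1, rotated]) (simp add: fG)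
    qed
    have "infsum f (A b) = infsum (G \<circ> \<phi>) (A b)" by (rule infsum_cong) (simp add: fG)
    also have "\<dots> = infsum G (\<phi> ` A b)" by (rule infsum_reindex[OF inj, symmetric])
    also have "\<dots> \<le> infsum G T"
      by (rule infsum_mono_neutral[OF Gsi Gs]) (use sub G0 in auto)
    also have "\<dots> = R^2 * W^(k-3)" using Ghs prod_s by (simp add: infsumI)
    finally show ?thesis using fs by simp
  qed
  define A' where "A' = A True \<union> A False"
  have disj: "A True \<inter> A False = {}" by (auto simp: A_def)
  have fA': "f summable_on A'" unfolding A'_def
    using Ab[of True] Ab[of False] by (intro summable_on_Un_disjoint disj) auto
  have iA': "infsum f A' \<le> 2 * (R^2 * W^(k-3))"
    unfolding A'_def using Ab[of True] Ab[of False] by (subst infsum_Un_disjoint) (auto simp: disj)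
  have memA: "js \<in> A' \<longleftrightarrow> length js = k \<and> momentum js = 0 \<and> js!q1 \<in> Lg \<and> js!q2 \<in> Lg" for js
    unfolding A'_def A_def by auto
  have ce: "ind summable_on {js. length js = k} \<longleftrightarrow> f summable_on A'"
    by (rule summable_on_cong_neutral) (auto simp: memA ind_def f_def)
  have ie: "infsum ind {js. length js = k} = infsum f A'"
    by (rule infsum_cong_neutral) (auto simp: memA ind_def f_def)
  show "ind summable_on {js. length js = k}" using ce fA' by simp
  show "infsum ind {js. length js = k} \<le> 2 * (infsum u Lg)^2 * (infsum u UNIV)^(k-3)"
    using ie iA' by (simp add: R_def W_def mult.assoc)
qed

lemma mu_three:
  assumes "length js \<ge> 3" "mu js > real N"
  shows "3 \<le> card {q. q < length js \<and> jnorm (js!q) > real N}"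
proof -
  define ys where "ys = sort (map jnorm js)"
  define xs where "xs = rev ys"
  define n where "n = length js"
  have ly: "length ys = n" by (simp add: ys_def n_def)
  have sy: "sorted ys" by (simp add: ys_def)
  have x2: "xs!2 > real N" using assms(2) by (simp add: mu_def xs_def ys_def)
  have xi: "xs!i = ys!(n - 1 - i)" if "i < n" for i using that ly by (simp add: xs_def rev_nth)
  have n3: "n \<ge> 3" using assms(1) by (simp add: n_def)
  have "xs!2 \<le> xs!1" "xs!2 \<le> xs!0" unfolding xi[of 0] xi[of 1] xi[of 2] using n3
    by (simp_all add: xi ly sorted_nth_mono[OF sy])
  with x2 have big: "\<forall>i\<in>{0,1,2}. xs!i > real N" by auto
  have "3 \<le> card {i. i < length xs \<and> xs!i > real N}"
  proof -
    have "{0,1,2} \<subseteq> {i. i < length xs \<and> xs!i > real N}" using big assms(1) ly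
      by (auto simp: xs_def n_def)
    from card_mono[OF _ this] show ?thesis by simp
  qed
  also have "card {i. i < length xs \<and> xs!i > real N} = length (filter (\<lambda>x. x > real N) xs)"
    by (simp add: length_filter_conv_card)
  also have "\<dots> = size (filter_mset (\<lambda>x. x > real N) (mset xs))"
    by (metis mset_filter size_mset)
  also have "mset xs = mset (map jnorm js)" by (simp add: xs_def ys_def)
  also have "size (filter_mset (\<lambda>x. x > real N) (mset (map jnorm js))) = length (filter (\<lambda>x. x > real N) (map jnorm js))"
    by (metis mset_filter size_mset)
  also have "\<dots> = card {q. q < length js \<and> jnorm (js!q) > real N}"
    unfolding length_filter_conv_card by (rule arg_cong[where f=card]) auto
  finally show ?thesis .
qed

lemma pair_exists:
  fixes n p :: nat
  assumes "3 \<le> card {q. q < n \<and> P q}"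
  shows "\<exists>q1 q2. q1 < q2 \<and> q2 < n \<and> q1 \<noteq> p \<and> q2 \<noteq> p \<and> P q1 \<and> P q2"
proof -
  define M where "M = {q. q < n \<and> P q} - {p}"
  have "card {q. q < n \<and> P q} - card {p} \<le> card M" unfolding M_def
    by (rule diff_card_le_card_Diff) simp
  with assms have "Suc (Suc 0) \<le> card M" by simp
  then obtain a M' where "M = insert a M'" "a \<notin> M'" "Suc 0 \<le> card M'" by (auto simp: card_le_Suc_iff)
  then obtain b M'' where "M' = insert b M''" by (auto simp: card_le_Suc_iff)
  with \<open>a \<notin> M'\<close> \<open>M = insert a M'\<close> have ab: "a \<in> M" "b \<in> M" "a \<noteq> b" by auto
  show ?thesis
    using ab by (intro exI[of _ "min a b"] exI[of _ "max a b"]) (auto simp: M_def min_def max_def)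
qed

lemma jnorm_nonneg: "jnorm j \<ge> 0" by (simp add: jnorm_def anorm_def sum_nonneg)

lemma nonres_bound:
  fixes z :: "('d::finite) idx \<Rightarrow> complex" and c :: "'d idx list \<Rightarrow> complex" and N k :: nat
  assumes k3: "k \<ge> 3" and rho: "\<rho> \<ge> 0" and nf: "normal_form N k c" and zL: "in_L \<rho> z" and Ff: "finite F"
  shows "(\<Sum>j\<in>F. exp (\<rho> * jnorm j) * cmod (\<Sum>\<^sub>\<infinity>js\<in>{js. length js = k}. cnr c js * dl z (bar j) js))
    \<le> 2 * real k ^ 3 * pnorm k c * (remainder N \<rho> z)^2 * (wnorm \<rho> z)^(k-3)"
proof -
  define u where "u j = exp (\<rho> * jnorm j) * cmod (z j)" for j
  define e where "e j = exp (\<rho> * jnorm j)" for j :: "'d idx"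
  define L where "L = {js::'d idx list. length js = k}"
  define Lg where "Lg = {j::'d idx. jnorm j > real N}"
  define P where "P = pnorm k c"
  define R where "R = remainder N \<rho> z"
  define W where "W = wnorm \<rho> z"
  have u0: "u j \<ge> 0" for j by (simp add: u_def)
  have us: "u summable_on UNIV" using zL by (simp add: in_L_def u_def[abs_def])
  have R_eq: "R = infsum u Lg" by (simp add: R_def remainder_def u_def[abs_def] Lg_def)
  have W_eq: "W = infsum u UNIV" by (simp add: W_def wnorm_def u_def[abs_def])
  have RW0: "R \<ge> 0" "W \<ge> 0" by (simp_all add: R_eq W_eq infsum_nonneg u0)
  have zs: "(\<lambda>j. cmod (z j)) summable_on UNIV"
  proof (rule summable_on_comparison_test[OF us])
    fix j :: "'d idx"
    have "1 \<le> exp (\<rho> * jnorm j)" using rho jnorm_nonneg[of j] by simp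
    then show "cmod (z j) \<le> u j" unfolding u_def
      using mult_right_mono[OF \<open>1 \<le> exp (\<rho> * jnorm j)\<close> norm_ge_zero[of "z j"]] by simp
  qed simp
  have hp: "hom_poly k c" and nfc: "\<And>js. c js \<noteq> 0 \<Longrightarrow> resonant js \<or> mu js > real N"
    using nf by (auto simp: normal_form_def)
  obtain B where cB: "\<And>js. cmod (c js) \<le> B"
    using hp unfolding hom_poly_def bdd_above_def by auto
  have cz: "c js = 0" if "length js \<noteq> k \<or> momentum js \<noteq> 0" for js
    using hp that unfolding hom_poly_def by blast
  have bddP: "bdd_above ((\<lambda>js. cmod (c js)) ` {js. length js = k \<and> momentum js = 0})"
    using cB by (auto intro!: bdd_aboveI)
  have cP: "cmod (c js) \<le> P" if "length js = k" "momentum js = 0" for js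
    unfolding P_def pnorm_def by (rule cSUP_upper[OF _ bddP]) (use that in auto)
  have P0: "P \<ge> 0"
  proof -
    have "momentum (replicate k ((0::int^'d), True)) = 0" by (simp add: momentum_def sum_list_replicate)
    then have "cmod (c (replicate k (0, True))) \<le> P" by (intro cP) simp_all
    then show ?thesis by (meson norm_ge_zero order_trans)
  qed
  have B0: "0 \<le> B" using order_trans[OF norm_ge_zero cB] .
  have cnrB: "cmod (cnr c js) \<le> B" for js using cB[of js] B0 by (auto simp: cnr_def)
  define h where "h j js = cnr c js * dl z (bar j) js" for j js
  have hs: "h j summable_on L" for j
    unfolding h_def L_def by (rule dpoly_formula(1)[OF zs cnrB])
  have hns: "(\<lambda>js. norm (h j js)) summable_on L" for j
    using hs[of j] by (simp add: summable_on_iff_abs_summable_on_complex)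
  define PR where "PR p = {(q1,q2). q1 < q2 \<and> q2 < k \<and> q1 \<noteq> p \<and> q2 \<noteq> p}" for p :: nat
  define ind where "ind p q1 q2 js = (if momentum js = 0 \<and> js!q1 \<in> Lg \<and> js!q2 \<in> Lg then (\<Prod>q\<in>{..<k}-{p}. u (js!q)) else 0)"
    for p q1 q2 and js :: "'d idx list"
  have PRf: "finite (PR p)" for p
    by (rule finite_subset[of _ "{..<k} \<times> {..<k}"]) (auto simp: PR_def)
  have PRc: "card (PR p) \<le> k * k" for p
  proof -
    have "card (PR p) \<le> card ({..<k} \<times> {..<k})" by (rule card_mono) (auto simp: PR_def)
    then show ?thesis by (simp add: card_cartesian_product)
  qed
  have inds: "ind p q1 q2 summable_on L \<and> infsum (ind p q1 q2) L \<le> 2 * R^2 * W^(k-3)"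
    if "p < k" "(q1,q2) \<in> PR p" for p q1 q2
  proof -
    have c: "p < k" "q1 < k" "q2 < k" "p \<noteq> q1" "p \<noteq> q2" "q1 \<noteq> q2" using that by (auto simp: PR_def)
    show ?thesis
      using pair_sum[OF u0 us c, of N] unfolding ind_def L_def Lg_def R_eq W_eq by simp
  qed
  have ind0: "ind p q1 q2 js \<ge> 0" for p q1 q2 js by (simp add: ind_def u0 prod_nonneg)
  define Gf where "Gf js = P * (\<Sum>p<k. \<Sum>pq\<in>PR p. ind p (fst pq) (snd pq) js)" for js
  have Gf0: "Gf js \<ge> 0" for js unfolding Gf_def using P0 by (intro mult_nonneg_nonneg sum_nonneg ind0)
  have Gfs: "Gf summable_on L \<and> infsum Gf L \<le> P * (real k * (real k * real k) * (2 * R^2 * W^(k-3)))"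
  proof -
    have s1: "(\<lambda>js. \<Sum>pq\<in>PR p. ind p (fst pq) (snd pq) js) summable_on L \<and>
       infsum (\<lambda>js. \<Sum>pq\<in>PR p. ind p (fst pq) (snd pq) js) L \<le> real k * real k * (2 * R^2 * W^(k-3))"
      if "p < k" for p
    proof -
      have a: "(\<lambda>js. \<Sum>pq\<in>PR p. ind p (fst pq) (snd pq) js) summable_on L \<and>
        infsum (\<lambda>js. \<Sum>pq\<in>PR p. ind p (fst pq) (snd pq) js) L = (\<Sum>pq\<in>PR p. infsum (ind p (fst pq) (snd pq)) L)"
        by (rule finsum_infsum[OF PRf]) (use inds that in auto)
      have "(\<Sum>pq\<in>PR p. infsum (ind p (fst pq) (snd pq)) L) \<le> (\<Sum>pq\<in>PR p. 2 * R^2 * W^(k-3))"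
        by (rule sum_mono) (use inds that in auto)
      also have "\<dots> = real (card (PR p)) * (2 * R^2 * W^(k-3))" by simp
      also have "\<dots> \<le> real k * real k * (2 * R^2 * W^(k-3))"
        using PRc[of p] RW0 by (intro mult_right_mono) (simp_all flip: of_nat_mult)
      finally show ?thesis using a by simp
    qed
    have a: "(\<lambda>js. \<Sum>p<k. \<Sum>pq\<in>PR p. ind p (fst pq) (snd pq) js) summable_on L \<and>
       infsum (\<lambda>js. \<Sum>p<k. \<Sum>pq\<in>PR p. ind p (fst pq) (snd pq) js) L =
         (\<Sum>p<k. infsum (\<lambda>js. \<Sum>pq\<in>PR p. ind p (fst pq) (snd pq) js) L)"
      by (rule finsum_infsum) (use s1 in auto)
    have "(\<Sum>p<k. infsum (\<lambda>js. \<Sum>pq\<in>PR p. ind p (fst pq) (snd pq) js) L) \<le> (\<Sum>p<k. real k * real k * (2 * R^2 * W^(k-3)))"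
      by (rule sum_mono) (use s1 in auto)
    also have "\<dots> = real k * (real k * real k * (2 * R^2 * W^(k-3)))" by simp
    finally have b: "infsum (\<lambda>js. \<Sum>p<k. \<Sum>pq\<in>PR p. ind p (fst pq) (snd pq) js) L \<le> real k * (real k * real k * (2 * R^2 * W^(k-3)))"
      using a by simp
    show ?thesis unfolding Gf_def using a b P0
      by (auto simp: infsum_cmult_right summable_on_cmult_right intro: mult_left_mono)
  qed
  have ptw: "(\<Sum>j\<in>F. e j * norm (h j js)) \<le> Gf js" if js: "js \<in> L" for js
  proof (cases "cnr c js = 0")
    case True
    then show ?thesis using Gf0[of js] by (simp add: h_def)
  next
    case False
    then have nres: "\<not> resonant js" and c0: "c js \<noteq> 0" by (auto simp: cnr_def split: if_splits)
    have len: "length js = k" using js by (simp add: L_def)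
    have mom: "momentum js = 0" using cz[of js] c0 by blast
    have mu: "mu js > real N" using nfc[OF c0] nres by blast
    have cnrP: "cmod (cnr c js) \<le> P" using cP[OF len mom] nres by (simp add: cnr_def)
    define a where "a p = (\<Prod>q\<in>{..<k}-{p}. cmod (z (js!q)))" for p
    have dlb: "norm (dl z (bar j) js) \<le> (\<Sum>p<k. if js!p = bar j then a p else 0)" for j
    proof -
      have "norm (dl z (bar j) js) \<le> (\<Sum>p<k. norm (if js!p = bar j then (\<Prod>q\<in>{..<k}-{p}. z (js!q)) else 0))"
        unfolding dl_pos len by (rule norm_sum)
      also have "\<dots> = (\<Sum>p<k. if js!p = bar j then a p else 0)"
        by (rule sum.cong) (auto simp: a_def prod_norm)
      finally show ?thesis .
    qed
    have a0: "a p \<ge> 0" for p by (simp add: a_def prod_nonneg)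
    have "(\<Sum>j\<in>F. e j * norm (h j js)) \<le> (\<Sum>j\<in>F. e j * (P * (\<Sum>p<k. if js!p = bar j then a p else 0)))"
    proof (rule sum_mono)
      fix j assume "j \<in> F"
      have "norm (h j js) \<le> P * (\<Sum>p<k. if js!p = bar j then a p else 0)"
        unfolding h_def norm_mult using cnrP dlb[of j] P0
        by (intro mult_mono) (auto intro!: sum_nonneg a0)
      then show "e j * norm (h j js) \<le> e j * (P * (\<Sum>p<k. if js!p = bar j then a p else 0))"
        by (intro mult_left_mono) (auto simp: e_def)
    qed
    also have "\<dots> = P * (\<Sum>p<k. \<Sum>j\<in>F. if j = bar (js!p) then e (js!p) * a p else 0)"
    proof -
      have "(\<Sum>j\<in>F. e j * (P * (\<Sum>p<k. if js!p = bar j then a p else 0))) =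
          P * (\<Sum>j\<in>F. \<Sum>p<k. e j * (if js!p = bar j then a p else 0))"
        by (simp add: sum_distrib_left mult.left_commute)
      also have "\<dots> = P * (\<Sum>j\<in>F. \<Sum>p<k. if j = bar (js!p) then e (js!p) * a p else 0)"
        by (intro arg_cong[where f="\<lambda>x. P * x"] sum.cong refl) (auto simp: bar_eq_iff e_def)
      also have "\<dots> = P * (\<Sum>p<k. \<Sum>j\<in>F. if j = bar (js!p) then e (js!p) * a p else 0)"
        by (subst sum.swap) (rule refl)
      finally show ?thesis .
    qed
    also have "\<dots> \<le> P * (\<Sum>p<k. e (js!p) * a p)"
      by (intro mult_left_mono[OF sum_mono P0]) (auto simp: Ff e_def a0)
    also have "\<dots> \<le> P * (\<Sum>p<k. \<Sum>pq\<in>PR p. ind p (fst pq) (snd pq) js)"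
    proof (intro mult_left_mono[OF sum_mono P0])
      fix p assume p: "p \<in> {..<k}"
      have "e (js!p) * a p \<le> exp (\<rho> * (\<Sum>q\<in>{..<k}-{p}. jnorm (js!q))) * a p"
        using momentum_bound[OF mom, of p] p len rho a0
        by (auto simp: e_def intro!: mult_right_mono mult_left_mono)
      also have "\<dots> = (\<Prod>q\<in>{..<k}-{p}. u (js!q))"
        by (simp add: a_def u_def exp_sum sum_distrib_left prod.distrib)
      also have "\<dots> \<le> (\<Sum>pq\<in>PR p. ind p (fst pq) (snd pq) js)"
      proof -
        have "3 \<le> card {q. q < k \<and> jnorm (js!q) > real N}"
          using mu_three[of js N] mu k3 len by simp
        from pair_exists[OF this, of p] obtain q1 q2 where
          q: "q1 < q2" "q2 < k" "q1 \<noteq> p" "q2 \<noteq> p" "jnorm (js!q1) > real N" "jnorm (js!q2) > real N"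
          by blast
        have "(q1,q2) \<in> PR p" using q by (simp add: PR_def)
        moreover have "ind p q1 q2 js = (\<Prod>q\<in>{..<k}-{p}. u (js!q))"
          using q mom by (simp add: ind_def Lg_def)
        ultimately show ?thesis
          using member_le_sum[of "(q1,q2)" "PR p" "\<lambda>pq. ind p (fst pq) (snd pq) js"] PRf ind0 by force
      qed
      finally show "e (js!p) * a p \<le> (\<Sum>pq\<in>PR p. ind p (fst pq) (snd pq) js)" .
    qed
    finally show ?thesis by (simp add: Gf_def)
  qed
  have "(\<Sum>j\<in>F. exp (\<rho> * jnorm j) * cmod (infsum (h j) L)) \<le> (\<Sum>j\<in>F. e j * infsum (\<lambda>js. norm (h j js)) L)"
  proof (rule sum_mono)
    fix j assume "j \<in> F"
    have "cmod (infsum (h j) L) \<le> infsum (\<lambda>js. norm (h j js)) L"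
      by (rule norm_infsum_bound) (use hs[of j] in \<open>simp add: summable_on_iff_abs_summable_on_complex\<close>)
    then show "exp (\<rho> * jnorm j) * cmod (infsum (h j) L) \<le> e j * infsum (\<lambda>js. norm (h j js)) L"
      by (simp add: e_def)
  qed
  also have "\<dots> = (\<Sum>j\<in>F. infsum (\<lambda>js. e j * norm (h j js)) L)"
    by (simp add: infsum_cmult_right hns)
  also have "\<dots> = infsum (\<lambda>js. \<Sum>j\<in>F. e j * norm (h j js)) L"
    by (rule conjunct2[OF finsum_infsum, symmetric]) (auto simp: Ff intro!: summable_on_cmult_right hns)
  also have "\<dots> \<le> infsum Gf L"
    by (rule infsum_mono) (use Gfs ptw in \<open>auto simp: Ff intro!: conjunct1[OF finsum_infsum] summable_on_cmult_right hns\<close>)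
  also have "\<dots> \<le> P * (real k * (real k * real k) * (2 * R^2 * W^(k-3)))" using Gfs by simp
  also have "\<dots> = 2 * real k ^ 3 * P * R^2 * W^(k-3)" by (simp add: power3_eq_cube)
  finally show ?thesis by (simp add: h_def[abs_def] L_def P_def R_def W_def)
qed

lemma sqrt_add_sq_le: "X \<ge> 0 \<Longrightarrow> (\<epsilon>::real) \<ge> 0 \<Longrightarrow> sqrt (X + \<epsilon>^2) \<le> sqrt X + \<epsilon>"
proof -
  assume X: "X \<ge> 0" and e: "\<epsilon> \<ge> 0"
  have "X + \<epsilon>^2 \<le> (sqrt X + \<epsilon>)^2"
    using X e by (simp add: power2_sum)
  then have "sqrt (X + \<epsilon>^2) \<le> sqrt ((sqrt X + \<epsilon>)^2)" by (rule real_sqrt_le_mono)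
  also have "\<dots> = sqrt X + \<epsilon>" using X e by simp
  finally show ?thesis .
qed

lemma fin_gronwall:
  fixes f f' :: "'j \<Rightarrow> real \<Rightarrow> complex" and e :: "'j \<Rightarrow> real" and g :: "'j \<Rightarrow> real \<Rightarrow> real"
    and B :: "real \<Rightarrow> real"
  assumes Ff: "finite F" and t: "0 \<le> t" "t \<le> T"
    and deriv: "\<And>j s. j \<in> F \<Longrightarrow> s \<in> {0..T} \<Longrightarrow> (f j has_vector_derivative f' j s) (at s within {0..T})"
    and Bc: "continuous_on {0..T} B"
    and e0: "\<And>j. e j \<ge> 0"
    and ineq: "\<And>j s. j \<in> F \<Longrightarrow> s \<in> {0..T} \<Longrightarrow> Re (cnj (f j s) * f' j s) \<le> cmod (f j s) * g j s"
    and g0: "\<And>j s. j \<in> F \<Longrightarrow> s \<in> {0..T} \<Longrightarrow> g j s \<ge> 0"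
    and gB: "\<And>s. s \<in> {0..T} \<Longrightarrow> (\<Sum>j\<in>F. e j * g j s) \<le> B s"
  shows "(\<Sum>j\<in>F. e j * cmod (f j t)) \<le> (\<Sum>j\<in>F. e j * cmod (f j 0)) + integral {0..t} B"
proof -
  define I where "I s = integral {0..s} B" for s
  have Ider: "(I has_real_derivative B s) (at s within {0..T})" if "s \<in> {0..T}" for s
    unfolding I_def has_real_derivative_iff_has_vector_derivative
    by (rule integral_has_vector_derivative[OF Bc that])
  have I0: "I 0 = 0" by (simp add: I_def)
  define C where "C = (\<Sum>j\<in>F. e j)"
  have C0: "C \<ge> 0" by (simp add: C_def e0 sum_nonneg)
  have main: "(\<Sum>j\<in>F. e j * cmod (f j t)) \<le> (\<Sum>j\<in>F. e j * cmod (f j 0)) + I t + \<epsilon> * C"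
    if eps: "\<epsilon> > 0" for \<epsilon>
  proof -
    define q where "q j s = (Re (f j s))^2 + (Im (f j s))^2 + \<epsilon>^2" for j s
    have qpos: "q j s > 0" for j s unfolding q_def using eps
      by (intro add_nonneg_pos) auto
    define \<phi> where "\<phi> s = (\<Sum>j\<in>F. e j * sqrt (q j s)) - I s" for s
    have qder: "((\<lambda>s. q j s) has_real_derivative 2 * Re (cnj (f j s) * f' j s)) (at s within {0..T})"
      if "j \<in> F" "s \<in> {0..T}" for j s
    proof -
      have d: "((\<lambda>x. Re (f j x)) has_real_derivative Re (f' j s)) (at s within {0..T})"
              "((\<lambda>x. Im (f j x)) has_real_derivative Im (f' j s)) (at s within {0..T})"
        using deriv[OF that] by (simp_all add: has_vector_derivative_complex_iff)
      show ?thesis unfolding q_def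
        by (rule derivative_eq_intros d refl)+ (simp add: algebra_simps)
    qed
    have sder: "((\<lambda>s. sqrt (q j s)) has_real_derivative Re (cnj (f j s) * f' j s) / sqrt (q j s)) (at s within {0..T})"
      if "j \<in> F" "s \<in> {0..T}" for j s
    proof -
      have "((\<lambda>s. sqrt (q j s)) has_real_derivative (inverse (sqrt (q j s)) / 2) * (2 * Re (cnj (f j s) * f' j s))) (at s within {0..T})"
        by (rule DERIV_chain2[OF DERIV_real_sqrt[OF qpos] qder[OF that]])
      then show ?thesis by (rule DERIV_cong) (simp add: divide_simps)
    qed
    have \<phi>der: "(\<phi> has_real_derivative (\<Sum>j\<in>F. e j * (Re (cnj (f j s) * f' j s) / sqrt (q j s))) - B s) (at s within {0..T})"
      if "s \<in> {0..T}" for s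
      unfolding \<phi>_def
      by (intro DERIV_diff DERIV_sum DERIV_cmult sder Ider that)
    have \<phi>c: "continuous_on {0..T} \<phi>"
      using \<phi>der by (meson DERIV_continuous continuous_on_eq_continuous_within)
    have "\<phi> t \<le> \<phi> 0"
    proof (rule DERIV_nonpos_imp_decreasing_open[OF t(1)])
      show "continuous_on {0..t} \<phi>" by (rule continuous_on_subset[OF \<phi>c]) (use t in auto)
    next
      fix x assume x: "0 < x" "x < t"
      then have xi: "x \<in> interior {0..T}" using t by simp
      have xT: "x \<in> {0..T}" using x t by simp
      have "(\<phi> has_real_derivative (\<Sum>j\<in>F. e j * (Re (cnj (f j x) * f' j x) / sqrt (q j x))) - B x) (at x)"
        using \<phi>der[OF xT] by (simp add: at_within_interior[OF xi])
      moreover have "(\<Sum>j\<in>F. e j * (Re (cnj (f j x) * f' j x) / sqrt (q j x))) - B x \<le> 0"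
      proof -
        have "(\<Sum>j\<in>F. e j * (Re (cnj (f j x) * f' j x) / sqrt (q j x))) \<le> (\<Sum>j\<in>F. e j * g j x)"
        proof (rule sum_mono)
          fix j assume j: "j \<in> F"
          have sq: "sqrt (q j x) > 0" using qpos by simp
          have cm: "cmod (f j x) \<le> sqrt (q j x)" unfolding cmod_def q_def
            by (rule real_sqrt_le_mono) simp
          have "Re (cnj (f j x) * f' j x) / sqrt (q j x) \<le> cmod (f j x) * g j x / sqrt (q j x)"
            using ineq[OF j xT] sq by (simp add: divide_right_mono)
          also have "\<dots> \<le> sqrt (q j x) * g j x / sqrt (q j x)"
            using cm g0[OF j xT] sq by (intro divide_right_mono mult_right_mono) auto
          also have "\<dots> = g j x" using sq by simp
          finally show "e j * (Re (cnj (f j x) * f' j x) / sqrt (q j x)) \<le> e j * g j x"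
            by (intro mult_left_mono e0)
        qed
        then show ?thesis using gB[OF xT] by simp
      qed
      ultimately show "\<exists>y. (\<phi> has_real_derivative y) (at x) \<and> y \<le> 0" by blast
    qed
    have "(\<Sum>j\<in>F. e j * cmod (f j t)) \<le> (\<Sum>j\<in>F. e j * sqrt (q j t))"
      by (intro sum_mono mult_left_mono e0) (simp add: cmod_def q_def)
    also have "\<dots> = \<phi> t + I t" by (simp add: \<phi>_def)
    also have "\<dots> \<le> \<phi> 0 + I t" using \<open>\<phi> t \<le> \<phi> 0\<close> by simp
    also have "\<phi> 0 = (\<Sum>j\<in>F. e j * sqrt (q j 0))" by (simp add: \<phi>_def I0)
    also have "(\<Sum>j\<in>F. e j * sqrt (q j 0)) \<le> (\<Sum>j\<in>F. e j * (cmod (f j 0) + \<epsilon>))"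
    proof (intro sum_mono mult_left_mono e0)
      fix j
      show "sqrt (q j 0) \<le> cmod (f j 0) + \<epsilon>"
        unfolding q_def cmod_def using sqrt_add_sq_le[of "(Re (f j 0))\<^sup>2 + (Im (f j 0))\<^sup>2" \<epsilon>] eps by simp
    qed
    also have "(\<Sum>j\<in>F. e j * (cmod (f j 0) + \<epsilon>)) = (\<Sum>j\<in>F. e j * cmod (f j 0)) + \<epsilon> * C"
      by (simp add: C_def algebra_simps sum.distrib sum_distrib_left)
    finally show ?thesis by simp
  qed
  have "(\<Sum>j\<in>F. e j * cmod (f j t)) \<le> (\<Sum>j\<in>F. e j * cmod (f j 0)) + I t"
  proof (rule field_le_epsilon)
    fix d :: real assume d: "d > 0"
    have "(\<Sum>j\<in>F. e j * cmod (f j t)) \<le> (\<Sum>j\<in>F. e j * cmod (f j 0)) + I t + (d / (C + 1)) * C"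
      using main[of "d / (C+1)"] d C0 by simp
    also have "(d / (C + 1)) * C \<le> d" using d C0 by (simp add: field_simps)
    finally show "(\<Sum>j\<in>F. e j * cmod (f j t)) \<le> (\<Sum>j\<in>F. e j * cmod (f j 0)) + I t + d" by simp
  qed
  then show ?thesis by (simp add: I_def)
qed

lemma inL_abs:
  fixes z :: "('d::finite) idx \<Rightarrow> complex"
  assumes zL: "in_L \<rho> z" and rho: "\<rho> \<ge> 0"
  shows "(\<lambda>j. cmod (z j)) summable_on UNIV"
proof (rule summable_on_comparison_test)
  show "(\<lambda>j. exp (\<rho> * jnorm j) * cmod (z j)) summable_on UNIV" using zL by (simp add: in_L_def)
next
  fix j :: "'d idx"
  have "1 \<le> exp (\<rho> * jnorm j)" using rho jnorm_nonneg[of j] by simp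
  then show "cmod (z j) \<le> exp (\<rho> * jnorm j) * cmod (z j)"
    using mult_right_mono[OF \<open>1 \<le> exp (\<rho> * jnorm j)\<close> norm_ge_zero[of "z j"]] by simp
qed simp

lemma diff_bound:
  fixes x y :: "('d::finite) idx \<Rightarrow> complex"
  assumes xL: "in_L \<rho> x" and yL: "in_L \<rho> y"
  shows "\<bar>infsum (\<lambda>j. exp (\<rho> * jnorm j) * cmod (x j)) S - infsum (\<lambda>j. exp (\<rho> * jnorm j) * cmod (y j)) S\<bar>
     \<le> wnorm \<rho> (\<lambda>j. x j - y j)"
proof -
  define ex where "ex j = exp (\<rho> * jnorm j) * cmod (x j)" for j
  define ey where "ey j = exp (\<rho> * jnorm j) * cmod (y j)" for j
  define ed where "ed j = exp (\<rho> * jnorm j) * cmod (x j - y j)" for j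
  have exs: "ex summable_on UNIV" using xL by (simp add: in_L_def ex_def[abs_def])
  have eys: "ey summable_on UNIV" using yL by (simp add: in_L_def ey_def[abs_def])
  have eds: "ed summable_on UNIV"
  proof (rule summable_on_comparison_test[OF summable_on_add[OF exs eys]])
    fix j
    have "cmod (x j - y j) \<le> cmod (x j) + cmod (y j)" by (rule norm_triangle_ineq4)
    then show "ed j \<le> ex j + ey j" unfolding ed_def ex_def ey_def
      by (simp add: distrib_left[symmetric])
  qed (simp add: ed_def)
  have exS: "ex summable_on S" by (rule summable_on_subset_banach[OF exs]) simp
  have eyS: "ey summable_on S" by (rule summable_on_subset_banach[OF eys]) simp
  have edS: "ed summable_on S" by (rule summable_on_subset_banach[OF eds]) simp
  have pt: "\<bar>ex j - ey j\<bar> \<le> ed j" for j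
  proof -
    have "\<bar>cmod (x j) - cmod (y j)\<bar> \<le> cmod (x j - y j)" by (rule norm_triangle_ineq3)
    then show ?thesis unfolding ex_def ey_def ed_def
      by (simp add: right_diff_distrib[symmetric] abs_mult)
  qed
  have dS: "(\<lambda>j. ex j - ey j) summable_on S"
    using summable_on_add[OF exS summable_on_uminus[THEN iffD2, OF eyS]] by simp
  have "infsum ex S - infsum ey S = infsum (\<lambda>j. ex j - ey j) S"
    using infsum_add[OF exS summable_on_uminus[THEN iffD2, OF eyS]] by (simp add: infsum_uminus)
  also have "\<bar>\<dots>\<bar> \<le> infsum (\<lambda>j. \<bar>ex j - ey j\<bar>) S"
  proof -
    have "(\<lambda>j. norm (ex j - ey j)) summable_on S"
      by (rule summable_on_comparison_test[OF edS]) (use pt in auto)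
    from norm_infsum_bound[OF this] show ?thesis by simp
  qed
  also have "\<dots> \<le> infsum ed S"
    by (rule infsum_mono) (use pt edS in \<open>auto intro: summable_on_comparison_test[OF edS]\<close>)
  also have "\<dots> \<le> infsum ed UNIV"
    by (rule infsum_mono_neutral[OF edS eds]) (auto simp: ed_def)
  also have "\<dots> = wnorm \<rho> (\<lambda>j. x j - y j)" by (simp add: wnorm_def ed_def[abs_def])
  finally show ?thesis by (simp add: ex_def[abs_def] ey_def[abs_def])
qed

lemma cont_norms:
  fixes z :: "real \<Rightarrow> ('d::finite) idx \<Rightarrow> complex"
  assumes hs: "ham_solution \<rho> v k c T z"
  shows "continuous_on {0..T} (\<lambda>s. infsum (\<lambda>j. exp (\<rho> * jnorm j) * cmod (z s j)) S)"
proof -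
  have inL: "\<And>s. s \<in> {0..T} \<Longrightarrow> in_L \<rho> (z s)" using hs by (simp add: ham_solution_def)
  have lim: "\<And>t. t \<in> {0..T} \<Longrightarrow> ((\<lambda>s. wnorm \<rho> (\<lambda>j. z s j - z t j)) \<longlongrightarrow> 0) (at t within {0..T})"
    using hs by (simp add: ham_solution_def)
  show ?thesis unfolding continuous_on_eq_continuous_within
  proof
    fix t assume t: "t \<in> {0..T}"
    show "continuous (at t within {0..T}) (\<lambda>s. infsum (\<lambda>j. exp (\<rho> * jnorm j) * cmod (z s j)) S)"
      unfolding continuous_within
    proof (rule LIM_zero_cancel, rule tendsto_0_le[OF lim[OF t], where K=1])
      show "\<forall>\<^sub>F s in at t within {0..T}. norm (infsum (\<lambda>j. exp (\<rho> * jnorm j) * cmod (z s j)) S -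
          infsum (\<lambda>j. exp (\<rho> * jnorm j) * cmod (z t j)) S) \<le> norm (wnorm \<rho> (\<lambda>j. z s j - z t j)) * 1"
        unfolding eventually_at_filter
      proof (rule always_eventually, intro allI impI)
        fix s assume "s \<noteq> t" "s \<in> {0..T}"
        then have "\<bar>infsum (\<lambda>j. exp (\<rho> * jnorm j) * cmod (z s j)) S - infsum (\<lambda>j. exp (\<rho> * jnorm j) * cmod (z t j)) S\<bar>
             \<le> wnorm \<rho> (\<lambda>j. z s j - z t j)"
          by (intro diff_bound inL t)
        then show "norm (infsum (\<lambda>j. exp (\<rho> * jnorm j) * cmod (z s j)) S -
          infsum (\<lambda>j. exp (\<rho> * jnorm j) * cmod (z t j)) S) \<le> norm (wnorm \<rho> (\<lambda>j. z s j - z t j)) * 1"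
          by simp
      qed
    qed
  qed
qed

lemma ineq_alg:
  assumes q: "Im q = 0" and s: "\<sigma> = 1 \<or> \<sigma> = -1"
  shows "Re (cnj w * (\<sigma> * \<i> * (complex_of_real om * w + (w * q + h)))) \<le> cmod w * cmod h"
proof -
  have qr: "q = complex_of_real (Re q)" using q by (simp add: complex_eq_iff)
  have "cnj w * (\<sigma> * \<i> * (complex_of_real om * w + (w * q + h))) =
        \<sigma> * \<i> * complex_of_real (om + Re q) * (w * cnj w) + \<sigma> * \<i> * cnj w * h"
    by (subst qr) (simp add: algebra_simps)
  also have "w * cnj w = complex_of_real ((Re w)^2 + (Im w)^2)" by (rule complex_mult_cnj)
  finally have e: "cnj w * (\<sigma> * \<i> * (complex_of_real om * w + (w * q + h))) =
        \<sigma> * \<i> * complex_of_real ((om + Re q) * ((Re w)^2 + (Im w)^2)) + \<sigma> * \<i> * cnj w * h"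
    by simp
  have "Re (\<sigma> * \<i> * complex_of_real ((om + Re q) * ((Re w)^2 + (Im w)^2))) = 0" using s by auto
  moreover have "Re (\<sigma> * \<i> * cnj w * h) \<le> cmod (\<sigma> * \<i> * cnj w * h)" by (rule complex_Re_le_cmod)
  moreover have "cmod (\<sigma> * \<i> * cnj w * h) = cmod w * cmod h" using s by (auto simp: norm_mult)
  moreover have "Re (cnj w * (\<sigma> * \<i> * (complex_of_real om * w + (w * q + h)))) =
     Re (\<sigma> * \<i> * complex_of_real ((om + Re q) * ((Re w)^2 + (Im w)^2))) + Re (\<sigma> * \<i> * cnj w * h)"
    unfolding e by (simp only: plus_complex.sel)
  ultimately show ?thesis by linarith
qed

theorem proposition2p3:
  fixes N k :: nat and \<rho> T t :: real
    and v :: "int ^ 'd::finite \<Rightarrow> real"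
    and c :: "'d idx list \<Rightarrow> complex"
    and z :: "real \<Rightarrow> 'd idx \<Rightarrow> complex"
  assumes "k \<ge> 3" and "\<rho> > 0"
    and "normal_form N k c"
    and "ham_solution \<rho> v k c T z"
    and "t \<in> {0..T}"
  shows "remainder N \<rho> (z t) \<le> remainder N \<rho> (z 0) + 4 * real k ^ 3 * pnorm k c *
           integral {0..t} (\<lambda>s. (remainder N \<rho> (z s))\<^sup>2 * wnorm \<rho> (z s) ^ (k - 3)) \<and>
         wnorm \<rho> (z t) \<le> wnorm \<rho> (z 0) + 4 * real k ^ 3 * pnorm k c *
           integral {0..t} (\<lambda>s. (remainder N \<rho> (z s))\<^sup>2 * wnorm \<rho> (z s) ^ (k - 3))"
proof -
  note k3 = assms(1) and rho = assms(2) and nf = assms(3) and hs = assms(4) and tT = assms(5)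
  have t0: "0 \<le> t" "t \<le> T" using tT by auto
  have rho0: "\<rho> \<ge> 0" using rho by simp
  define P where "P = pnorm k c"
  define Rf where "Rf s = remainder N \<rho> (z s)" for s
  define Wf where "Wf s = wnorm \<rho> (z s)" for s
  define K where "K = 4 * real k ^ 3 * P"
  define Bf where "Bf s = K * ((Rf s)^2 * (Wf s)^(k-3))" for s
  define L where "L = {js::'d idx list. length js = k}"
  define Lg where "Lg = {j::'d idx. jnorm j > real N}"
  define e where "e j = exp (\<rho> * jnorm j)" for j :: "'d idx"
  have hp: "hom_poly k c" using nf by (simp add: normal_form_def)
  have cbar: "\<And>js. c (map bar js) = cnj (c js)" using hp by (simp add: hom_poly_def)
  obtain B where cB: "\<And>js. cmod (c js) \<le> B"
    using hp unfolding hom_poly_def bdd_above_def by auto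
  have B0: "0 \<le> B" using order_trans[OF norm_ge_zero cB] .
  have cz: "c js = 0" if "length js \<noteq> k \<or> momentum js \<noteq> 0" for js
    using hp that unfolding hom_poly_def by blast
  have bddP: "bdd_above ((\<lambda>js. cmod (c js)) ` {js. length js = k \<and> momentum js = 0})"
    using cB by (auto intro!: bdd_aboveI)
  have P0: "P \<ge> 0"
  proof -
    have "momentum (replicate k ((0::int^'d), True)) = 0" by (simp add: momentum_def sum_list_replicate)
    then have "cmod (c (replicate k (0, True))) \<le> P"
      unfolding P_def pnorm_def by (intro cSUP_upper[OF _ bddP]) simp_all
    then show ?thesis by (meson norm_ge_zero order_trans)
  qed
  have inL: "in_L \<rho> (z s)" and real: "is_real_seq (z s)" if "s \<in> {0..T}" for s
    using hs that by (auto simp: ham_solution_def)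
  have Rcont: "continuous_on {0..T} Rf"
    using cont_norms[OF hs, of Lg] unfolding Rf_def remainder_def Lg_def .
  have Wcont: "continuous_on {0..T} Wf"
    using cont_norms[OF hs, of UNIV] unfolding Wf_def wnorm_def .
  have Bcont: "continuous_on {0..T} Bf"
    unfolding Bf_def by (intro continuous_intros Rcont Wcont)
  define hh where "hh j s = (\<Sum>\<^sub>\<infinity>js\<in>L. cnr c js * dl (z s) (bar j) js)" for j s
  define f' where "f' j s = (if snd j then - \<i> else \<i>) *
      (complex_of_real (omega v (fst j)) * z s j + dpoly k c (z s) (bar j))" for j s
  have deriv: "((\<lambda>s. z s j) has_vector_derivative f' j s) (at s within {0..T})" if "s \<in> {0..T}" for j s
  proof -
    obtain a b where j: "j = (a, b)" by (cases j)
    have h1: "((\<lambda>s. z s (a, True)) has_vector_derivative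
            (- \<i> * (of_real (omega v a) * z s (a, True) + dpoly k c (z s) (a, False))))
          (at s within {0..T})"
     and h2: "((\<lambda>s. z s (a, False)) has_vector_derivative
            (\<i> * (of_real (omega v a) * z s (a, False) + dpoly k c (z s) (a, True))))
          (at s within {0..T})"
      using hs that unfolding ham_solution_def by blast+
    show ?thesis using h1 h2 by (cases b) (auto simp: j f'_def bar_def)
  qed
  have decomp: "\<exists>q. Im q = 0 \<and> dpoly k c (z s) (bar j) = z s j * q + hh j s"
    if s: "s \<in> {0..T}" for j s
  proof -
    have zs: "(\<lambda>j. cmod (z s j)) summable_on UNIV" by (rule inL_abs[OF inL[OF s] rho0])
    have cresB: "cmod (cres c js) \<le> B" for js using cB[of js] B0 by (simp add: cres_def)
    have cnrB: "cmod (cnr c js) \<le> B" for js using cB[of js] B0 by (simp add: cnr_def)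
    have "dpoly k c (z s) (bar j) = (\<Sum>\<^sub>\<infinity>js\<in>L. c js * dl (z s) (bar j) js)"
      unfolding L_def by (rule dpoly_formula(2)[OF zs cB])
    also have "\<dots> = (\<Sum>\<^sub>\<infinity>js\<in>L. cres c js * dl (z s) (bar j) js + cnr c js * dl (z s) (bar j) js)"
      by (rule infsum_cong) (simp add: cres_def cnr_def)
    also have "\<dots> = (\<Sum>\<^sub>\<infinity>js\<in>L. cres c js * dl (z s) (bar j) js) + hh j s"
      unfolding hh_def L_def
      by (rule infsum_add; rule dpoly_formula(1)) (rule zs cresB cnrB)+
    finally have e1: "dpoly k c (z s) (bar j) = (\<Sum>\<^sub>\<infinity>js\<in>L. cres c js * dl (z s) (bar j) js) + hh j s" .
    obtain q where "Im q = 0" "(\<Sum>\<^sub>\<infinity>js\<in>L. cres c js * dl (z s) (bar j) js) = z s j * q"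
      using resonant_part[where z="z s" and c=c and k=k and j=j, OF real[OF s] cbar] unfolding L_def by blast
    then show ?thesis using e1 by auto
  qed
  have ineq: "Re (cnj (z s j) * f' j s) \<le> cmod (z s j) * cmod (hh j s)" if s: "s \<in> {0..T}" for j s
  proof -
    obtain q where q: "Im q = 0" "dpoly k c (z s) (bar j) = z s j * q + hh j s"
      using decomp[OF s] by blast
    define \<sigma> :: complex where "\<sigma> = (if snd j then -1 else 1)"
    have "f' j s = \<sigma> * \<i> * (complex_of_real (omega v (fst j)) * z s j + (z s j * q + hh j s))"
      by (simp add: f'_def q(2) \<sigma>_def)
    then show ?thesis using ineq_alg[OF q(1), of \<sigma>] by (simp add: \<sigma>_def)
  qed
  have gB: "(\<Sum>j\<in>F. e j * cmod (hh j s)) \<le> Bf s" if s: "s \<in> {0..T}" and F: "finite F" for s F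
  proof -
    have "(\<Sum>j\<in>F. e j * cmod (hh j s)) \<le> 2 * real k ^ 3 * P * (Rf s)^2 * (Wf s)^(k-3)"
      using nonres_bound[OF k3 rho0 nf inL[OF s] F]
      by (simp add: e_def hh_def L_def P_def Rf_def Wf_def)
    also have "\<dots> \<le> Bf s"
    proof -
      have W0: "Wf s \<ge> 0" by (simp add: Wf_def wnorm_def infsum_nonneg)
      have "0 \<le> real k ^ 3 * P * (Rf s)^2 * (Wf s)^(k-3)" using P0 W0 by simp
      then show ?thesis by (simp add: Bf_def K_def algebra_simps)
    qed
    finally show ?thesis .
  qed
  have gron: "(\<Sum>j\<in>F. e j * cmod (z t j)) \<le> (\<Sum>j\<in>F. e j * cmod (z 0 j)) + integral {0..t} Bf"
    if F: "finite F" for F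
    apply (rule fin_gronwall[where f="\<lambda>j s. z s j" and f'=f' and g="\<lambda>j s. cmod (hh j s)", OF F t0 deriv Bcont])
    subgoal by simp
    subgoal by (simp add: e_def)
    subgoal for j s by (rule ineq)
    subgoal by simp
    subgoal for s by (rule gB[OF _ F])
    done
  have int: "integral {0..t} Bf = K * integral {0..t} (\<lambda>s. (remainder N \<rho> (z s))\<^sup>2 * wnorm \<rho> (z s) ^ (k - 3))"
    using integral_cmul[of "{0..t}" K "\<lambda>s. (Rf s)^2 * (Wf s)^(k-3)"]
    by (simp add: Bf_def[abs_def] Rf_def Wf_def)
  have zL0: "in_L \<rho> (z 0)" and zLt: "in_L \<rho> (z t)" using inL t0 by auto
  have s0: "(\<lambda>j. e j * cmod (z 0 j)) summable_on UNIV" unfolding e_def using zL0 by (simp add: in_L_def)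
  have st: "(\<lambda>j. e j * cmod (z t j)) summable_on UNIV" unfolding e_def using zLt by (simp add: in_L_def)
  have final: "infsum (\<lambda>j. e j * cmod (z t j)) S \<le> infsum (\<lambda>j. e j * cmod (z 0 j)) S + integral {0..t} Bf" for S
  proof (rule infsum_le_finite_sums)
    show "(\<lambda>j. e j * cmod (z t j)) summable_on S"
      by (rule summable_on_subset_banach[OF st]) simp
  next
    fix F assume F: "finite F" "F \<subseteq> S"
    have "(\<Sum>j\<in>F. e j * cmod (z 0 j)) \<le> infsum (\<lambda>j. e j * cmod (z 0 j)) S"
      by (rule finite_sum_le_infsum[OF summable_on_subset_banach[OF s0] F(1) F(2)]) (simp_all add: e_def)
    then show "(\<Sum>j\<in>F. e j * cmod (z t j)) \<le> infsum (\<lambda>j. e j * cmod (z 0 j)) S + integral {0..t} Bf"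
      using gron[OF F(1)] by simp
  qed
  show ?thesis
    using final[of Lg] final[of UNIV] unfolding int K_def P_def
    by (simp add: remainder_def wnorm_def e_def Lg_def)
qed

end
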